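(* Let $n\geq 1$ and let $E,F\subseteq\mathbb{R}^n$ be arbitrary sets (not necessarily Borel). Let $G$ be either the group of rigid motions of $\mathbb{R}^n$ or the group of similarities of $\mathbb{R}^n$. Then for almost all $\sigma\in G$, \[\dim_H\big(E\cap\sigma(F)\big)\leq\max\{0,\dim_H(E\times F)-n\}\,.\]
   Context: $\dim_H$ denotes (classical) Hausdorff dimension, defined for every subset of a Euclidean space; $E\times F\subseteq\mathbb{R}^{2n}$ is the Cartesian product. A rigid motion is a map $x\mapsto Rx+z$ with $R$ an orthogonal transformation (rotation) and $z\in\mathbb{R}^n$; a similarity is a map $x\mapsto cRx+z$ with additionally a scaling factor $c>0$. "Almost all $\sigma\in G$" is with respect to the natural (Haar) measure on $G$, i.e., the product of the natural measure on rotations (and Lebesgue measure on scalings $c>0$ in the similarity case) with Lebesgue measure on translations $z\in\mathbb{R}^n$. *)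

theory Defs
  imports "HOL-Analysis.Analysis" "HOL-Probability.Probability"
begin

text \<open>Contribution of one covering set to the s-dimensional Hausdorff sum,
  with the usual conventions: the empty set contributes 0, and for s = 0 a
  nonempty set contributes 1 (diam U to the power 0 = 1).\<close>
definition hcost :: "real \<Rightarrow> 'a::metric_space set \<Rightarrow> ennreal" where
  "hcost s U = (if U = {} then 0 else if s = 0 then 1 else ennreal (diameter U powr s))"

definition hausdorff_approx :: "real \<Rightarrow> real \<Rightarrow> 'a::metric_space set \<Rightarrow> ennreal" where
  "hausdorff_approx s \<delta> A =
     (INF U \<in> {U :: nat \<Rightarrow> 'a set. A \<subseteq> (\<Union>i. U i) \<and>
                  (\<forall>i. bounded (U i) \<and> diameter (U i) \<le> \<delta>)}.
        (\<Sum>i. hcost s (U i)))"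

definition hausdorff_outer :: "real \<Rightarrow> 'a::metric_space set \<Rightarrow> ennreal" where
  "hausdorff_outer s A = (SUP \<delta> \<in> {0<..}. hausdorff_approx s \<delta> A)"

definition hausdorff_dim :: "'a::metric_space set \<Rightarrow> real" where
  "hausdorff_dim A = Inf {s. 0 \<le> s \<and> hausdorff_outer s A = 0}"

definition haar_orthogonal :: "(real^'n^'n) measure \<Rightarrow> bool" where
  "haar_orthogonal M \<longleftrightarrow>
     sets M = sets (restrict_space borel {R. orthogonal_matrix R}) \<and>
     space M = {R. orthogonal_matrix R} \<and>
     prob_space M \<and>
     (\<forall>Q. orthogonal_matrix Q \<longrightarrow>
        (\<forall>A \<in> sets M. emeasure M ((\<lambda>R. Q ** R) ` A) = emeasure M A))"

end

theory Submission
  imports Defs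
begin


lemma approx_zero_iff:
  "hausdorff_approx s \<delta> A = 0 \<longleftrightarrow>
   (\<forall>e>0. \<exists>U. A \<subseteq> (\<Union>i. U i) \<and> (\<forall>i. bounded (U i) \<and> diameter (U i) \<le> \<delta>) \<and>
      (\<Sum>i. hcost s (U i)) < ennreal e)"
proof
  assume h: "hausdorff_approx s \<delta> A = 0"
  show "\<forall>e>0. \<exists>U. A \<subseteq> (\<Union>i. U i) \<and> (\<forall>i. bounded (U i) \<and> diameter (U i) \<le> \<delta>) \<and>
      (\<Sum>i. hcost s (U i)) < ennreal e"
  proof (intro allI impI)
    fix e :: real assume "e > 0"
    then have "hausdorff_approx s \<delta> A < ennreal e" using h by simp
    then show "\<exists>U. A \<subseteq> (\<Union>i. U i) \<and> (\<forall>i. bounded (U i) \<and> diameter (U i) \<le> \<delta>) \<and>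
      (\<Sum>i. hcost s (U i)) < ennreal e"
      unfolding hausdorff_approx_def by (auto simp: INF_less_iff)
  qed
next
  assume h: "\<forall>e>0. \<exists>U. A \<subseteq> (\<Union>i. U i) \<and> (\<forall>i. bounded (U i) \<and> diameter (U i) \<le> \<delta>) \<and>
      (\<Sum>i. hcost s (U i)) < ennreal e"
  have "hausdorff_approx s \<delta> A \<le> 0 + ennreal e" if "e > 0" for e
  proof -
    obtain U where U: "A \<subseteq> (\<Union>i. U i)" "\<forall>i. bounded (U i) \<and> diameter (U i) \<le> \<delta>"
      "(\<Sum>i. hcost s (U i)) < ennreal e" using h \<open>e>0\<close> by blast
    have "hausdorff_approx s \<delta> A \<le> (\<Sum>i. hcost s (U i))"
      unfolding hausdorff_approx_def using U(1,2) by (intro INF_lower) auto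
    then show ?thesis using U(3) by simp
  qed
  then show "hausdorff_approx s \<delta> A = 0"
    by (metis ennreal_le_epsilon le_zero_eq)
qed

lemma outer_zero_iff:
  "hausdorff_outer s A = 0 \<longleftrightarrow> (\<forall>\<delta>>0. hausdorff_approx s \<delta> A = 0)"
  unfolding hausdorff_outer_def bot_ennreal[symmetric] SUP_bot_conv by auto

lemma approx_mono_delta:
  assumes "\<delta> \<le> \<delta>'" shows "hausdorff_approx s \<delta>' A \<le> hausdorff_approx s \<delta> A"
  unfolding hausdorff_approx_def
  by (rule INF_superset_mono) (use assms in \<open>auto intro: order_trans\<close>)

lemma approx_mono_set:
  assumes "A \<subseteq> B" shows "hausdorff_approx s \<delta> A \<le> hausdorff_approx s \<delta> B"
  unfolding hausdorff_approx_def
  by (rule INF_superset_mono) (use assms in \<open>auto intro: order_trans\<close>)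

lemma outer_zero_mono_set:
  assumes "A \<subseteq> B" "hausdorff_outer s B = 0" shows "hausdorff_outer s A = 0"
  using assms approx_mono_set[OF assms(1)] unfolding outer_zero_iff
  by (metis le_zero_eq)

lemma dim_le:
  assumes "0 \<le> t" "hausdorff_outer t A = 0" shows "hausdorff_dim A \<le> t"
  unfolding hausdorff_dim_def
  by (rule cInf_lower) (use assms in \<open>auto intro: bdd_belowI[where m=0]\<close>)

lemma hcost_mono_s:
  assumes "0 \<le> s'" "s' < s" "diameter U \<le> 1" "bounded U"
  shows "hcost s U \<le> hcost s' U"
proof -
  have d0: "0 \<le> diameter U" using assms(4) by (rule diameter_ge_0)
  show ?thesis
  proof (cases "U = {}")
    case True then show ?thesis by (simp add: hcost_def)
  next
    case False
    have "diameter U powr s \<le> 1" using d0 assms by (intro powr_le1) auto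
    moreover have "diameter U powr s \<le> diameter U powr s'" if "s' \<noteq> 0"
      using d0 assms that by (intro powr_mono') auto
    ultimately show ?thesis using False assms
      by (auto simp: hcost_def ennreal_leI)
  qed
qed

lemma outer_zero_mono_s:
  assumes "0 \<le> s'" "s' < s" "hausdorff_outer s' A = 0"
  shows "hausdorff_outer s A = 0"
  unfolding outer_zero_iff
proof (intro allI impI)
  fix \<delta> :: real assume "\<delta> > 0"
  define \<delta>1 where "\<delta>1 = min \<delta> 1"
  have "\<delta>1 > 0" using \<open>\<delta>>0\<close> by (simp add: \<delta>1_def)
  then have z: "hausdorff_approx s' \<delta>1 A = 0" using assms(3) outer_zero_iff by blast
  show "hausdorff_approx s \<delta> A = 0" unfolding approx_zero_iff
  proof (intro allI impI)
    fix e :: real assume "e > 0"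
    then obtain U where U: "A \<subseteq> (\<Union>i. U i)" "\<forall>i. bounded (U i) \<and> diameter (U i) \<le> \<delta>1"
      "(\<Sum>i. hcost s' (U i)) < ennreal e" using z approx_zero_iff by metis
    have "(\<Sum>i. hcost s (U i)) \<le> (\<Sum>i. hcost s' (U i))"
      using U(2) assms by (intro suminf_le hcost_mono_s) (auto simp: \<delta>1_def)
    then show "\<exists>U. A \<subseteq> (\<Union>i. U i) \<and> (\<forall>i. bounded (U i) \<and> diameter (U i) \<le> \<delta>) \<and>
      (\<Sum>i. hcost s (U i)) < ennreal e"
      using U by (intro exI[of _ U]) (auto simp: \<delta>1_def)
  qed
qed



lemma ball_diam_le:
  fixes x :: "'a::real_normed_vector"
  assumes "0 \<le> \<rho>"
  shows "diameter (ball x \<rho>) \<le> 2*\<rho>"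
proof (rule diameter_le)
  show "ball x \<rho> \<noteq> {} \<or> 0 \<le> 2*\<rho>" using assms by simp
  fix y z assume "y \<in> ball x \<rho>" "z \<in> ball x \<rho>"
  then have "dist x y < \<rho>" "dist x z < \<rho>" by auto
  moreover have "dist y z \<le> dist x y + dist x z" by (metis dist_commute dist_triangle)
  ultimately show "norm (y - z) \<le> 2*\<rho>" by (simp add: dist_norm)
qed

lemma approx_finite_cover:
  fixes A :: "'a::real_normed_vector set"
  assumes "finite T" "A \<subseteq> (\<Union>x\<in>T. ball x \<rho>)" "0 < \<rho>" "2*\<rho> \<le> \<delta>" "s > 0"
  shows "hausdorff_approx s \<delta> A \<le> of_nat (card T) * ennreal ((2*\<rho>) powr s)"
proof -
  obtain xs where xs: "set xs = T" "distinct xs" using finite_distinct_list[OF assms(1)] by blast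
  define U where "U i = (if i < length xs then ball (xs!i) \<rho> else {})" for i
  have cov: "A \<subseteq> (\<Union>i. U i)"
  proof
    fix x assume "x \<in> A"
    then obtain t where "t \<in> T" "x \<in> ball t \<rho>" using assms(2) by blast
    then obtain i where "i < length xs" "xs!i = t" using xs(1) by (metis in_set_conv_nth)
    then show "x \<in> (\<Union>i. U i)" using \<open>x \<in> ball t \<rho>\<close> by (auto simp: U_def)
  qed
  have ok: "\<forall>i. bounded (U i) \<and> diameter (U i) \<le> \<delta>"
    using ball_diam_le[of \<rho>] assms(3,4) by (auto simp: U_def intro: order_trans)
  have "hausdorff_approx s \<delta> A \<le> (\<Sum>i. hcost s (U i))"
    unfolding hausdorff_approx_def using cov ok by (intro INF_lower) auto
  also have "(\<Sum>i. hcost s (U i)) = (\<Sum>i<length xs. hcost s (U i))"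
    by (rule suminf_finite) (auto simp: U_def hcost_def)
  also have "\<dots> \<le> of_nat (card {..<length xs}) * ennreal ((2*\<rho>) powr s)"
  proof (rule sum_bounded_above)
    fix i assume "i \<in> {..<length xs}"
    then have "U i = ball (xs!i) \<rho>" by (simp add: U_def)
    moreover have "diameter (ball (xs!i) \<rho>) powr s \<le> (2*\<rho>) powr s"
      using ball_diam_le[of \<rho> "xs!i"] assms(3,5) diameter_ge_0[OF bounded_ball]
      by (intro powr_mono2) auto
    ultimately show "hcost s (U i) \<le> ennreal ((2*\<rho>) powr s)"
      using assms(3,5) by (auto simp: hcost_def intro: ennreal_leI)
  qed
  also have "card {..<length xs} = card T" using xs distinct_card by fastforce
  finally show ?thesis .
qed

lemma approx_zero_Union:
  assumes "\<And>L::nat. hausdorff_approx s \<delta> (A L) = 0"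
  shows "hausdorff_approx s \<delta> (\<Union>L. A L) = 0"
  unfolding approx_zero_iff
proof (intro allI impI)
  fix e :: real assume "e > 0"
  have "\<forall>L. \<exists>U. A L \<subseteq> (\<Union>i. U i) \<and> (\<forall>i. bounded (U i) \<and> diameter (U i) \<le> \<delta>) \<and>
      (\<Sum>i. hcost s (U i)) < ennreal (e/4 * (1/2)^L)"
    using assms approx_zero_iff \<open>e>0\<close> by (metis divide_pos_pos half_gt_zero_iff mult_pos_pos
        zero_less_numeral zero_less_one zero_less_power)
  then obtain UU where UU: "\<And>L. A L \<subseteq> (\<Union>i. UU L i)"
    "\<And>L i. bounded (UU L i) \<and> diameter (UU L i) \<le> \<delta>"
    "\<And>L. (\<Sum>i. hcost s (UU L i)) < ennreal (e/4 * (1/2)^L)"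
    by metis
  define W where "W k = (case prod_decode k of (L, i) \<Rightarrow> UU L i)" for k
  have "(\<Sum>k. hcost s (W k)) = (\<Sum>L. \<Sum>i. hcost s (UU L i))"
    unfolding W_def
    using suminf_ennreal_2dimen[of "\<lambda>L. \<Sum>i. hcost s (UU L i)" "\<lambda>(L,i). hcost s (UU L i)"]
    by (simp add: case_prod_beta split_beta)
  also have "\<dots> \<le> (\<Sum>L. ennreal (e/4 * (1/2)^L))"
    using UU(3) by (intro suminf_le) (auto intro: less_imp_le)
  also have "\<dots> = ennreal (\<Sum>L. e/4 * (1/2)^L)"
    using \<open>e>0\<close> by (intro suminf_ennreal2) (auto intro!: summable_mult summable_geometric)
  also have "(\<Sum>L. e/4 * (1/2::real)^L) = e/2"
    using suminf_mult[OF summable_geometric[of "1/2::real"], of "e/4"] suminf_geometric[of "1/2::real"]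
    by simp
  also have "ennreal (e/2) < ennreal e" using \<open>e>0\<close> by (simp add: ennreal_lessI)
  finally have sum: "(\<Sum>k. hcost s (W k)) < ennreal e" .
  have cov: "(\<Union>L. A L) \<subseteq> (\<Union>k. W k)"
  proof
    fix x assume "x \<in> (\<Union>L. A L)"
    then obtain L i where "x \<in> UU L i" using UU(1) by blast
    then have "x \<in> W (prod_encode (L, i))" by (simp add: W_def)
    then show "x \<in> (\<Union>k. W k)" by blast
  qed
  have ok: "\<forall>k. bounded (W k) \<and> diameter (W k) \<le> \<delta>"
    using UU(2) by (simp add: W_def split: prod.split)
  show "\<exists>U. (\<Union>L. A L) \<subseteq> (\<Union>i. U i) \<and> (\<forall>i. bounded (U i) \<and> diameter (U i) \<le> \<delta>) \<and>
      (\<Sum>i. hcost s (U i)) < ennreal e"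
    using cov ok sum by blast
qed



lemma inner_sum_Basis_coeff:
  fixes f :: "'a::euclidean_space \<Rightarrow> real"
  assumes "c \<in> Basis"
  shows "(\<Sum>b\<in>Basis. f b *\<^sub>R b) \<bullet> c = f c"
  using assms by (simp add: inner_sum_left inner_Basis if_distrib cong: if_cong)

lemma floor_aux:
  fixes u :: real and N :: nat
  assumes "0 \<le> u" "u \<le> real N" "N > 0"
  shows "\<bar>u - real (min (N - 1) (nat \<lfloor>u\<rfloor>))\<bar> \<le> 1"
proof -
  have f0: "0 \<le> \<lfloor>u\<rfloor>" using assms by simp
  have k1: "real (nat \<lfloor>u\<rfloor>) \<le> u" using f0 by (simp add: of_nat_nat)
  have k2: "u < real (nat \<lfloor>u\<rfloor>) + 1" using f0 by (simp add: of_nat_nat)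
  show ?thesis
  proof (cases "nat \<lfloor>u\<rfloor> \<le> N - 1")
    case True
    then have "min (N - 1) (nat \<lfloor>u\<rfloor>) = nat \<lfloor>u\<rfloor>" by simp
    then show ?thesis using k1 k2 by (simp only: abs_le_iff) linarith
  next
    case False
    then have "real (nat \<lfloor>u\<rfloor>) \<ge> real N" using assms(3) by simp
    then have "u = real N" using k1 assms(2) by simp
    then show ?thesis using False assms(3) by (simp add: min_def of_nat_diff)
  qed
qed

lemma grid_cover:
  fixes a h :: real and N :: nat
  assumes "0 < a" "N > 0" "h = 2*a/N"
  shows "{x::'a::euclidean_space. \<forall>b\<in>Basis. \<bar>x\<bullet>b\<bar> \<le> a} \<subseteq>
    (\<Union>g \<in> (\<lambda>j. \<Sum>b\<in>Basis. (real (j b) * h - a) *\<^sub>R b) ` (PiE Basis (\<lambda>_. {..<N})).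
        ball g ((real DIM('a)+1)*h))"
proof
  fix x :: 'a assume x: "x \<in> {x. \<forall>b\<in>Basis. \<bar>x\<bullet>b\<bar> \<le> a}"
  have hpos: "h > 0" using assms by simp
  define j where "j b = (if b \<in> Basis then min (N-1) (nat \<lfloor>(x\<bullet>b + a)/h\<rfloor>) else undefined)" for b
  define g where "g = (\<Sum>b\<in>Basis. (real (j b) * h - a) *\<^sub>R b)"
  have jP: "j \<in> PiE Basis (\<lambda>_. {..<N})" using assms(2) by (auto simp: j_def PiE_def extensional_def)
  have comp: "\<bar>(x - g) \<bullet> b\<bar> \<le> h" if b: "b \<in> Basis" for b
  proof -
    define u where "u = (x\<bullet>b + a)/h"
    have u0: "0 \<le> u" using x b hpos by (auto simp: u_def abs_le_iff)
    have "x\<bullet>b + a \<le> 2*a" using x b by (auto simp: abs_le_iff)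
    then have u1: "u \<le> 2*a/h" unfolding u_def using hpos by (intro divide_right_mono) auto
    have hN: "h * real N = 2*a" using assms by simp
    have "2*a/h = real N" using hN hpos by (metis less_irrefl nonzero_mult_div_cancel_left)
    then have uN: "u \<le> real N" using u1 by simp
    have gb: "g \<bullet> b = real (j b) * h - a" unfolding g_def by (rule inner_sum_Basis_coeff[OF b])
    have "(x - g) \<bullet> b = h * (u - real (j b))"
      using hpos by (simp add: inner_diff_left gb u_def field_simps)
    moreover have "\<bar>u - real (j b)\<bar> \<le> 1" using floor_aux[OF u0 uN assms(2)] b by (simp add: j_def u_def)
    ultimately show ?thesis using hpos by (simp add: abs_mult)
  qed
  have "norm (x - g) \<le> (\<Sum>b\<in>Basis. \<bar>(x - g) \<bullet> b\<bar>)" by (rule norm_le_l1)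
  also have "\<dots> \<le> (\<Sum>b\<in>(Basis::'a set). h)" using comp by (intro sum_mono) auto
  also have "\<dots> < (real DIM('a)+1)*h" using hpos by (simp add: field_simps)
  finally have "x \<in> ball g ((real DIM('a)+1)*h)" by (simp add: dist_norm norm_minus_commute)
  then show "x \<in> (\<Union>g \<in> (\<lambda>j. \<Sum>b\<in>Basis. (real (j b) * h - a) *\<^sub>R b) ` (PiE Basis (\<lambda>_. {..<N})).
        ball g ((real DIM('a)+1)*h))" using jP unfolding g_def by blast
qed

lemma box_region_zero:
  assumes "0 < a" "0 < \<delta>"
  shows "hausdorff_approx (real DIM('a) + 1) \<delta> {x::'a::euclidean_space. \<forall>b\<in>Basis. \<bar>x\<bullet>b\<bar> \<le> a} = 0"
proof -
  let ?m = "DIM('a)"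
  let ?R = "{x::'a::euclidean_space. \<forall>b\<in>Basis. \<bar>x\<bullet>b\<bar> \<le> a}"
  define C where "C = (4*(real ?m+1)*a)^(?m+1)"
  have le: "hausdorff_approx (real ?m + 1) \<delta> ?R \<le> 0 + ennreal e" if "e > 0" for e
  proof -
    obtain N :: nat where N1: "N > C/e" and N2: "N > 4*(real ?m+1)*a/\<delta>"
      using reals_Archimedean2[of "max (C/e) (4*(real ?m+1)*a/\<delta>)"] by auto
    have "0 < 4*(real ?m+1)*a/\<delta>" using assms by simp
    then have "real N > 0" using N2 by linarith
    then have Npos: "N > 0" by simp
    define h where "h = 2*a/N"
    define \<rho> where "\<rho> = (real ?m+1)*h"
    define T where "T = (\<lambda>j. \<Sum>b\<in>Basis. (real (j b) * h - a) *\<^sub>R (b::'a)) ` (PiE Basis (\<lambda>_. {..<N}))"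
    have hpos: "h > 0" using assms Npos by (simp add: h_def)
    have rpos: "\<rho> > 0" using hpos by (simp add: \<rho>_def)
    have fin: "finite T" unfolding T_def by (intro finite_imageI finite_PiE) auto
    have cardT: "card T \<le> N ^ ?m"
    proof -
      have "card T \<le> card (PiE (Basis::'a set) (\<lambda>_. {..<N}))" unfolding T_def
        by (intro card_image_le finite_PiE) auto
      also have "\<dots> = N ^ ?m" by (simp add: card_PiE)
      finally show ?thesis .
    qed
    have r\<delta>: "2*\<rho> \<le> \<delta>"
    proof -
      have "2*\<rho> = 4*(real ?m+1)*a/N" by (simp add: \<rho>_def h_def)
      also have "\<dots> \<le> \<delta>" using N2 Npos assms by (simp add: field_simps)
      finally show ?thesis .
    qed
    have cov: "?R \<subseteq> (\<Union>g\<in>T. ball g \<rho>)" unfolding T_def \<rho>_def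
      by (rule grid_cover[OF assms(1) Npos h_def])
    have "hausdorff_approx (real ?m + 1) \<delta> ?R \<le> of_nat (card T) * ennreal ((2*\<rho>) powr (real ?m + 1))"
      by (rule approx_finite_cover[OF fin cov rpos r\<delta>]) simp
    also have "(2*\<rho>) powr (real ?m + 1) = (2*\<rho>) powr (real (?m+1))" by (simp add: add.commute)
    also have "\<dots> = (2*\<rho>)^(?m+1)" by (rule powr_realpow) (use rpos in simp)
    also have "of_nat (card T) * ennreal ((2*\<rho>)^(?m+1)) = ennreal (real (card T) * (2*\<rho>)^(?m+1))"
      by (simp add: ennreal_mult' ennreal_of_nat_eq_real_of_nat)
    also have "ennreal (real (card T) * (2*\<rho>)^(?m+1)) \<le> ennreal e"
    proof (rule ennreal_leI)
      have "real (card T) * (2*\<rho>)^(?m+1) \<le> real N ^ ?m * (2*\<rho>)^(?m+1)"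
        using cardT rpos by (intro mult_right_mono) (auto simp: of_nat_power[symmetric] simp del: of_nat_power)
      also have "real N ^ ?m * (2*\<rho>)^(?m+1) = C / N"
      proof -
        have "2*\<rho> = (4*(real ?m+1)*a)/N" by (simp add: \<rho>_def h_def)
        then have "(2*\<rho>)^(?m+1) = C / real N ^ (?m+1)" by (simp add: C_def power_divide)
        then show ?thesis using Npos by (simp add: field_simps)
      qed
      also have "C / N \<le> e" using N1 \<open>e>0\<close> Npos by (simp add: field_simps)
      finally show "real (card T) * (2*\<rho>)^(?m+1) \<le> e" .
    qed
    finally show ?thesis by simp
  qed
  have "hausdorff_approx (real ?m + 1) \<delta> ?R \<le> 0"
  proof (rule ennreal_le_epsilon)
    fix e :: real assume "0 < e"
    then show "hausdorff_approx (real ?m + 1) \<delta> ?R \<le> 0 + ennreal e" by (rule le)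
  qed
  then show ?thesis by simp
qed

lemma outer_UNIV_zero:
  "hausdorff_outer (real DIM('a) + 1) (UNIV::'a::euclidean_space set) = 0"
  unfolding outer_zero_iff
proof (intro allI impI)
  fix \<delta> :: real assume "\<delta> > 0"
  have "UNIV \<subseteq> (\<Union>L::nat. {x::'a. \<forall>b\<in>Basis. \<bar>x\<bullet>b\<bar> \<le> real L + 1})"
  proof
    fix x :: 'a assume "x \<in> UNIV"
    obtain L :: nat where "norm x \<le> real L" using real_arch_simple by blast
    have "\<forall>b\<in>Basis. \<bar>x\<bullet>b\<bar> \<le> real L + 1"
    proof
      fix b :: 'a assume "b \<in> Basis"
      then have "\<bar>x\<bullet>b\<bar> \<le> norm x" by (rule Basis_le_norm)
      then show "\<bar>x\<bullet>b\<bar> \<le> real L + 1" using \<open>norm x \<le> real L\<close> by linarith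
    qed
    then show "x \<in> (\<Union>L::nat. {x::'a. \<forall>b\<in>Basis. \<bar>x\<bullet>b\<bar> \<le> real L + 1})" by blast
  qed
  then have "UNIV = (\<Union>L::nat. {x::'a. \<forall>b\<in>Basis. \<bar>x\<bullet>b\<bar> \<le> real L + 1})" by blast
  then show "hausdorff_approx (real DIM('a) + 1) \<delta> (UNIV::'a set) = 0"
  proof -
    have "hausdorff_approx (real DIM('a) + 1) \<delta> (\<Union>L::nat. {x::'a. \<forall>b\<in>Basis. \<bar>x\<bullet>b\<bar> \<le> real L + 1}) = 0"
      by (intro approx_zero_Union box_region_zero) (use \<open>\<delta>>0\<close> in auto)
    then show ?thesis using \<open>UNIV = _\<close> by simp
  qed
qed



lemma powr_sum_le:
  fixes a b s :: real
  assumes "0 \<le> a" "0 \<le> b" "0 \<le> s"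
  shows "(a+b) powr s \<le> 2 powr s * (a powr s + b powr s)"
proof -
  have "(a+b) powr s \<le> (2 * max a b) powr s" using assms by (intro powr_mono2) auto
  also have "\<dots> = 2 powr s * max a b powr s" using assms by (simp add: powr_mult)
  also have "max a b powr s \<le> a powr s + b powr s" by (simp add: max_def)
  then have "2 powr s * max a b powr s \<le> 2 powr s * (a powr s + b powr s)" by simp
  finally show ?thesis .
qed

lemma half_pow_sum: "(\<Sum>i. e * (1/2::real)^(Suc i)) = e"
proof -
  have "(\<Sum>i. (e/2) * (1/2::real)^i) = (e/2) * (\<Sum>i. (1/2::real)^i)"
    by (rule suminf_mult[OF summable_geometric]) simp
  also have "(\<Sum>i. (1/2::real)^i) = 2" using suminf_geometric[of "1/2::real"] by simp
  finally show ?thesis by simp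
qed

lemma ball_cover:
  fixes A :: "'a::metric_space set"
  assumes "hausdorff_outer s A = 0" "s > 0" "\<delta> > 0" "e > 0"
  obtains c r where "A \<subseteq> (\<Union>i. ball (c i) (r i))" "\<forall>i. 0 \<le> r i \<and> r i \<le> \<delta>"
    "(\<Sum>i. ennreal (r i powr s)) \<le> ennreal e"
proof -
  define e' where "e' = e / (2 * 2 powr s)"
  have e'pos: "e' > 0" using assms by (simp add: e'_def)
  have "\<delta>/2 > 0" using assms by simp
  then have "hausdorff_approx s (\<delta>/2) A = 0" using assms(1) outer_zero_iff by blast
  then obtain U where U: "A \<subseteq> (\<Union>i. U i)" "\<forall>i. bounded (U i) \<and> diameter (U i) \<le> \<delta>/2"
      "(\<Sum>i. hcost s (U i)) < ennreal e'" using approx_zero_iff e'pos by metis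
  define \<eta> where "\<eta> i = min (\<delta>/2) ((e' * (1/2)^(Suc i)) powr (1/s))" for i
  define c where "c i = (SOME u. u \<in> U i)" for i
  define r where "r i = (if U i = {} then 0 else diameter (U i) + \<eta> i)" for i
  have \<eta>pos: "\<eta> i > 0" for i using assms e'pos by (simp add: \<eta>_def)
  have \<eta>s: "\<eta> i powr s \<le> e' * (1/2)^(Suc i)" for i
  proof -
    have "\<eta> i powr s \<le> ((e' * (1/2)^(Suc i)) powr (1/s)) powr s"
      using \<eta>pos[of i] assms by (intro powr_mono2) (auto simp: \<eta>_def)
    also have "\<dots> = e' * (1/2)^(Suc i)" using assms e'pos by (simp add: powr_powr)
    finally show ?thesis .
  qed
  have d0: "0 \<le> diameter (U i)" for i using U(2) diameter_ge_0 by blast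
  have cov: "A \<subseteq> (\<Union>i. ball (c i) (r i))"
  proof
    fix x assume "x \<in> A"
    then obtain i where xi: "x \<in> U i" using U(1) by blast
    then have ci: "c i \<in> U i" unfolding c_def by (meson someI)
    have "dist (c i) x \<le> diameter (U i)" using diameter_bounded_bound U(2) ci xi by blast
    also have "\<dots> < r i" using xi \<eta>pos[of i] by (auto simp: r_def)
    finally show "x \<in> (\<Union>i. ball (c i) (r i))" by auto
  qed
  have rb: "\<forall>i. 0 \<le> r i \<and> r i \<le> \<delta>"
  proof
    fix i
    have "\<eta> i \<le> \<delta>/2" by (simp add: \<eta>_def)
    moreover have "diameter (U i) \<le> \<delta>/2" using U(2) by blast
    ultimately show "0 \<le> r i \<and> r i \<le> \<delta>" using d0[of i] \<eta>pos[of i] by (auto simp: r_def)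
  qed
  have trm: "ennreal (r i powr s) \<le> ennreal (2 powr s) * (hcost s (U i) + ennreal (e' * (1/2)^(Suc i)))" for i
  proof (cases "U i = {}")
    case True then show ?thesis by (simp add: r_def)
  next
    case False
    have "r i powr s \<le> 2 powr s * (diameter (U i) powr s + \<eta> i powr s)"
      using False d0[of i] \<eta>pos[of i] assms(2) by (simp add: r_def powr_sum_le)
    also have "\<dots> \<le> 2 powr s * (diameter (U i) powr s + e' * (1/2)^(Suc i))"
      using \<eta>s[of i] by simp
    finally have "ennreal (r i powr s) \<le> ennreal (2 powr s * (diameter (U i) powr s + e' * (1/2)^(Suc i)))"
      by (rule ennreal_leI)
    also have "\<dots> = ennreal (2 powr s) * (hcost s (U i) + ennreal (e' * (1/2)^(Suc i)))"
      using False assms(2) e'pos by (simp add: hcost_def ennreal_mult ennreal_plus)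
    finally show ?thesis .
  qed
  have "(\<Sum>i. ennreal (r i powr s)) \<le> (\<Sum>i. ennreal (2 powr s) * (hcost s (U i) + ennreal (e' * (1/2)^(Suc i))))"
    using trm by (intro suminf_le) auto
  also have "\<dots> = ennreal (2 powr s) * ((\<Sum>i. hcost s (U i)) + (\<Sum>i. ennreal (e' * (1/2)^(Suc i))))"
    by (simp add: suminf_add)
  also have "(\<Sum>i. ennreal (e' * (1/2)^(Suc i))) = ennreal e'"
    using e'pos half_pow_sum[of e'] by (subst suminf_ennreal2) (auto intro!: summable_mult summable_geometric)
  also have "ennreal (2 powr s) * ((\<Sum>i. hcost s (U i)) + ennreal e') \<le> ennreal (2 powr s) * (ennreal e' + ennreal e')"
    using U(3) by (intro mult_left_mono add_right_mono) auto
  also have "\<dots> = ennreal e"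
  proof -
    have A: "ennreal (e'+e') = ennreal e' + ennreal e'" using e'pos by (intro ennreal_plus) auto
    have B: "ennreal (2 powr s * (e'+e')) = ennreal (2 powr s) * ennreal (e'+e')" using e'pos by (intro ennreal_mult) auto
    have C: "2 powr s * (e'+e') = e" by (simp add: e'_def)
    show ?thesis by (simp only: C[symmetric] B A)
  qed
  finally have sum: "(\<Sum>i. ennreal (r i powr s)) \<le> ennreal e" .
  show ?thesis by (rule that[OF cov rb sum])
qed



definition Sset :: "((real^'n) \<times> (real^'n)) \<Rightarrow> real \<Rightarrow> (real^'n \<Rightarrow> real^'n) \<Rightarrow> (real^'n) set" where
  "Sset c r f = {z. \<exists>y. (z + f y, y) \<in> ball c r}"

definition gfun :: "(nat \<Rightarrow> (real^'n) \<times> (real^'n)) \<Rightarrow> (nat \<Rightarrow> real) \<Rightarrow> real \<Rightarrow> (real^'n \<Rightarrow> real^'n) \<Rightarrow> real^'n \<Rightarrow> ennreal" where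
  "gfun c r t f z = (\<Sum>i. ennreal ((2 * r i) powr t) * indicator (Sset (c i) (r i) f) z)"

lemma gfun_bound:
  fixes E F :: "(real^'n) set"
  assumes cov: "E \<times> F \<subseteq> (\<Union>i. ball (c i) (r i))" and rb: "\<forall>i. 0 \<le> r i \<and> 2 * r i \<le> \<delta>" and "t > 0"
  shows "hausdorff_approx t \<delta> (E \<inter> (\<lambda>y. f y + z) ` F) \<le> gfun c r t f z"
proof -
  define V where "V i = {x. \<exists>y. (x,y) \<in> ball (c i) (r i) \<and> x = f y + z}" for i
  have Vsub: "V i \<subseteq> ball (fst (c i)) (r i)" for i
  proof
    fix x assume "x \<in> V i"
    then obtain y where "(x,y) \<in> ball (c i) (r i)" by (auto simp: V_def)
    then have "dist (c i) (x,y) < r i" by simp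
    moreover have "dist (fst (c i)) (fst (x,y)) \<le> dist (c i) (x,y)" by (rule dist_fst_le)
    ultimately show "x \<in> ball (fst (c i)) (r i)" by simp
  qed
  have Vb: "bounded (V i)" for i using Vsub bounded_subset[OF bounded_ball] by blast
  have Vd: "diameter (V i) \<le> 2 * r i" for i
    using Vsub[of i] ball_diam_le[of "r i" "fst (c i)"] rb
      diameter_subset[OF Vsub[of i] bounded_ball] by auto
  have covV: "E \<inter> (\<lambda>y. f y + z) ` F \<subseteq> (\<Union>i. V i)"
  proof
    fix x assume "x \<in> E \<inter> (\<lambda>y. f y + z) ` F"
    then obtain y where y: "y \<in> F" "x = f y + z" "x \<in> E" by auto
    then obtain i where "(x,y) \<in> ball (c i) (r i)" using cov by blast
    then show "x \<in> (\<Union>i. V i)" using y by (auto simp: V_def)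
  qed
  have "hausdorff_approx t \<delta> (E \<inter> (\<lambda>y. f y + z) ` F) \<le> (\<Sum>i. hcost t (V i))"
  proof -
    have "\<forall>i. bounded (V i) \<and> diameter (V i) \<le> \<delta>" using Vb Vd rb by (meson order_trans)
    then show ?thesis unfolding hausdorff_approx_def using covV by (intro INF_lower) auto
  qed
  also have "\<dots> \<le> gfun c r t f z" unfolding gfun_def
  proof (intro suminf_le allI)
    fix i
    show "hcost t (V i) \<le> ennreal ((2 * r i) powr t) * indicator (Sset (c i) (r i) f) z"
    proof (cases "V i = {}")
      case True then show ?thesis by (simp add: hcost_def)
    next
      case False
      then obtain x y where xy: "(x,y) \<in> ball (c i) (r i)" "x = f y + z" by (auto simp: V_def)
      then have "z \<in> Sset (c i) (r i) f" by (auto simp: Sset_def add.commute)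
      moreover have "diameter (V i) powr t \<le> (2 * r i) powr t"
        using Vd[of i] diameter_ge_0[OF Vb[of i]] \<open>t>0\<close> by (intro powr_mono2) auto
      ultimately show ?thesis using False \<open>t>0\<close> by (auto simp: hcost_def intro: ennreal_leI)
    qed
  qed simp_all
  finally show ?thesis .
qed

lemma open_Sset: "open (Sset c r f)"
proof -
  have "Sset c r f = (\<Union>y. (\<lambda>z. (z + f y, y)) -` ball c r)" by (auto simp: Sset_def)
  moreover have "open ((\<lambda>z. (z + f y, y)) -` ball c r)" for y
    by (intro continuous_open_vimage open_ball) (intro continuous_intros)
  ultimately show ?thesis by auto
qed

lemma Sset_measure:
  fixes f :: "real^'n \<Rightarrow> real^'n"
  assumes Lip: "\<forall>y y'. dist (f y) (f y') \<le> K * dist y y'" and "K \<ge> 0" "r \<ge> 0"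
  shows "emeasure lborel (Sset c r f) \<le> ennreal (unit_ball_vol (CARD('n)) * ((1+K)*r) ^ CARD('n))"
proof -
  define w where "w = fst c - f (snd c)"
  have "Sset c r f \<subseteq> cball w ((1+K)*r)"
  proof
    fix z assume "z \<in> Sset c r f"
    then obtain y where "(z + f y, y) \<in> ball c r" by (auto simp: Sset_def)
    then have d: "dist c (z + f y, y) < r" by simp
    have d1: "dist (fst c) (z + f y) < r" using d dist_fst_le[of c "(z + f y, y)"] by simp
    have d2: "dist (snd c) y < r" using d dist_snd_le[of c "(z + f y, y)"] by simp
    have "dist w z = norm ((fst c - (z + f y)) - (f (snd c) - f y))" by (simp add: w_def dist_norm algebra_simps)
    also have "\<dots> \<le> norm (fst c - (z + f y)) + norm (f (snd c) - f y)" by (rule norm_triangle_ineq4)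
    also have "\<dots> \<le> r + K * r"
    proof -
      have "norm (f (snd c) - f y) \<le> K * dist (snd c) y" using Lip by (simp add: dist_norm)
      also have "\<dots> \<le> K * r" using d2 \<open>K\<ge>0\<close> by (intro mult_left_mono) auto
      finally show ?thesis using d1 by (simp add: dist_norm)
    qed
    finally show "z \<in> cball w ((1+K)*r)" by (simp add: algebra_simps)
  qed
  then have "emeasure lborel (Sset c r f) \<le> emeasure lborel (cball w ((1+K)*r))"
    by (intro emeasure_mono) auto
  also have "\<dots> = ennreal (unit_ball_vol (DIM(real^'n)) * ((1+K)*r) ^ DIM(real^'n))"
    using assms by (intro emeasure_cball) auto
  finally show ?thesis by simp
qed

lemma gfun_integral:
  fixes f :: "real^'n \<Rightarrow> real^'n"
  assumes Lip: "\<forall>y y'. dist (f y) (f y') \<le> K * dist y y'" and "K \<ge> 0" "\<forall>i. 0 \<le> r i" "t > 0"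
  shows "(\<integral>\<^sup>+z. gfun c r t f z \<partial>lborel) \<le>
     ennreal (2 powr t * unit_ball_vol (CARD('n)) * (1+K) ^ CARD('n)) * (\<Sum>i. ennreal (r i powr (t + real CARD('n))))"
proof -
  let ?n = "CARD('n)"
  define Cst where "Cst = 2 powr t * unit_ball_vol ?n * (1+K) ^ ?n"
  have Cpos: "Cst \<ge> 0" using \<open>K\<ge>0\<close> by (simp add: Cst_def)
  have meas: "Sset (c i) (r i) f \<in> sets lborel" for i by (simp add: borel_open open_Sset)
  have "(\<integral>\<^sup>+z. gfun c r t f z \<partial>lborel) = (\<Sum>i. \<integral>\<^sup>+z. ennreal ((2 * r i) powr t) * indicator (Sset (c i) (r i) f) z \<partial>lborel)"
    unfolding gfun_def by (rule nn_integral_suminf) (use meas in auto)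
  also have "\<dots> = (\<Sum>i. ennreal ((2 * r i) powr t) * emeasure lborel (Sset (c i) (r i) f))"
    using meas by (simp add: nn_integral_cmult_indicator)
  also have "\<dots> \<le> (\<Sum>i. ennreal (Cst * r i powr (t + real ?n)))"
  proof (intro suminf_le allI)
    fix i
    have "ennreal ((2 * r i) powr t) * emeasure lborel (Sset (c i) (r i) f)
        \<le> ennreal ((2 * r i) powr t) * ennreal (unit_ball_vol ?n * ((1+K)*r i) ^ ?n)"
      using Sset_measure[OF Lip \<open>K\<ge>0\<close>, of "r i" "c i"] assms(3) by (intro mult_left_mono) auto
    also have "\<dots> = ennreal ((2 * r i) powr t * (unit_ball_vol ?n * ((1+K)*r i) ^ ?n))"
      using assms by (simp add: ennreal_mult)
    also have "(2 * r i) powr t * (unit_ball_vol ?n * ((1+K)*r i) ^ ?n) = Cst * r i powr (t + real ?n)"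
    proof (cases "r i = 0")
      case True then show ?thesis using \<open>t>0\<close> by simp
    next
      case False
      then have rp: "r i > 0" using assms(3) by (metis order_le_less)
      have "r i powr (t + real ?n) = r i powr t * r i ^ ?n" using rp by (simp add: powr_add powr_realpow)
      moreover have "(2 * r i) powr t = 2 powr t * r i powr t" using rp by (simp add: powr_mult)
      ultimately show ?thesis by (simp add: Cst_def power_mult_distrib)
    qed
    finally show "ennreal ((2 * r i) powr t) * emeasure lborel (Sset (c i) (r i) f) \<le> ennreal (Cst * r i powr (t + real ?n))" .
  qed simp_all
  also have "\<dots> = ennreal Cst * (\<Sum>i. ennreal (r i powr (t + real ?n)))"
    using Cpos by (simp add: ennreal_mult)
  finally show ?thesis by (simp add: Cst_def)
qed



lemma gfun_measurable:
  fixes Q :: "'q measure" and zq :: "'q \<Rightarrow> real^'n" and fq :: "'q \<Rightarrow> real^'n \<Rightarrow> real^'n"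
  assumes zm: "zq \<in> borel_measurable Q" and fm: "\<And>y. (\<lambda>q. fq q y) \<in> borel_measurable Q"
    and fc: "\<And>q. continuous_on UNIV (fq q)"
  shows "(\<lambda>q. gfun c r t (fq q) (zq q)) \<in> borel_measurable Q"
proof -
  obtain D :: "(real^'n) set" where D: "countable D" "\<And>X. open X \<Longrightarrow> X \<noteq> {} \<Longrightarrow> \<exists>d\<in>D. d \<in> X"
    by (rule countable_dense_setE) blast
  have ind: "(\<lambda>q. indicator (Sset (c i) (r i) (fq q)) (zq q) :: ennreal) \<in> borel_measurable Q" for i
  proof -
    let ?A = "{q. zq q \<in> Sset (c i) (r i) (fq q)}"
    have eq: "(\<lambda>q. indicator (Sset (c i) (r i) (fq q)) (zq q) :: ennreal) = indicator ?A"
      by (auto simp: indicator_def fun_eq_iff)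
    have "?A \<inter> space Q = (\<Union>y\<in>D. (\<lambda>q. (zq q + fq q y, y)) -` ball (c i) (r i) \<inter> space Q)"
    proof (intro set_eqI iffI)
      fix q assume q: "q \<in> ?A \<inter> space Q"
      then obtain y0 where y0: "(zq q + fq q y0, y0) \<in> ball (c i) (r i)" by (auto simp: Sset_def)
      let ?O = "(\<lambda>y. (zq q + fq q y, y)) -` ball (c i) (r i)"
      have "continuous_on UNIV (\<lambda>y. (zq q + fq q y, y))"
        by (intro continuous_on_Pair continuous_on_add continuous_on_const fc continuous_on_id)
      then have "open (?O \<inter> UNIV)"
        by (rule continuous_on_open_vimage[OF open_UNIV, THEN iffD1, rule_format, OF _ open_ball])
      moreover have "?O \<noteq> {}" using y0 by blast
      ultimately obtain d where "d \<in> D" "d \<in> ?O" using D(2)[of ?O] by auto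
      then show "q \<in> (\<Union>y\<in>D. (\<lambda>q. (zq q + fq q y, y)) -` ball (c i) (r i) \<inter> space Q)" using q by blast
    next
      fix q assume "q \<in> (\<Union>y\<in>D. (\<lambda>q. (zq q + fq q y, y)) -` ball (c i) (r i) \<inter> space Q)"
      then show "q \<in> ?A \<inter> space Q" by (auto simp: Sset_def)
    qed
    moreover have "(\<Union>y\<in>D. (\<lambda>q. (zq q + fq q y, y)) -` ball (c i) (r i) \<inter> space Q) \<in> sets Q"
    proof (rule sets.countable_UN''[OF D(1)])
      fix y
      have "(\<lambda>q. (zq q + fq q y, y)) \<in> borel_measurable Q"
        using zm fm[of y] by (intro borel_measurable_Pair borel_measurable_add) auto
      then show "(\<lambda>q. (zq q + fq q y, y)) -` ball (c i) (r i) \<inter> space Q \<in> sets Q"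
        by (rule measurable_sets) simp
    qed
    ultimately show ?thesis unfolding eq borel_measurable_indicator_iff by simp
  qed
  show ?thesis unfolding gfun_def
  proof (rule borel_measurable_suminf_order)
    fix i
    show "(\<lambda>q. ennreal ((2 * r i) powr t) * indicator (Sset (c i) (r i) (fq q)) (zq q)) \<in> borel_measurable Q"
      by (rule borel_measurable_times_ennreal[OF measurable_const ind]) simp
  qed
qed

lemma core:
  fixes E F :: "(real^'n) set"
  assumes H: "hausdorff_outer (t + real CARD('n)) (E \<times> F) = 0" and tpos: "t > 0" and dpos: "\<delta> > 0"
  obtains G :: "(real^'n \<Rightarrow> real^'n) \<Rightarrow> real^'n \<Rightarrow> ennreal" where
    "\<And>f z. hausdorff_approx t \<delta> (E \<inter> (\<lambda>y. f y + z) ` F) \<le> G f z"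
    "\<And>f K. K \<ge> 0 \<Longrightarrow> \<forall>y y'. dist (f y) (f y') \<le> K * dist y y' \<Longrightarrow> (\<integral>\<^sup>+z. G f z \<partial>lborel) = 0"
    "\<And>(Q::'q measure) zq fq. zq \<in> borel_measurable Q \<Longrightarrow> (\<And>y. (\<lambda>q. fq q y) \<in> borel_measurable Q) \<Longrightarrow>
       (\<And>q. continuous_on UNIV (fq q)) \<Longrightarrow> (\<lambda>q. G (fq q) (zq q)) \<in> borel_measurable Q"
proof -
  let ?s = "t + real CARD('n)"
  have spos: "?s > 0" using tpos by simp
  have "\<forall>k::nat. \<exists>c r. E \<times> F \<subseteq> (\<Union>i. ball (c i) (r i)) \<and> (\<forall>i. 0 \<le> r i \<and> r i \<le> \<delta>/2) \<and>
      (\<Sum>i. ennreal (r i powr ?s)) \<le> ennreal (1 / (real k + 1))"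
  proof
    fix k :: nat
    obtain c r where "E \<times> F \<subseteq> (\<Union>i. ball (c i) (r i))" "\<forall>i. 0 \<le> r i \<and> r i \<le> \<delta>/2"
      "(\<Sum>i. ennreal (r i powr ?s)) \<le> ennreal (1 / (real k + 1))"
    proof -
      have "\<delta>/2 > 0" "1 / (real k + 1) > 0" using dpos by auto
      then show ?thesis using that by (rule ball_cover[OF H spos])
    qed
    then show "\<exists>c r. E \<times> F \<subseteq> (\<Union>i. ball (c i) (r i)) \<and> (\<forall>i. 0 \<le> r i \<and> r i \<le> \<delta>/2) \<and>
      (\<Sum>i. ennreal (r i powr ?s)) \<le> ennreal (1 / (real k + 1))" by blast
  qed
  then obtain cc where "\<forall>k. \<exists>r. E \<times> F \<subseteq> (\<Union>i. ball (cc k i) (r i)) \<and> (\<forall>i. 0 \<le> r i \<and> r i \<le> \<delta>/2) \<and>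
      (\<Sum>i. ennreal (r i powr ?s)) \<le> ennreal (1 / (real k + 1))"
    by (rule choice[THEN exE]) 
  then obtain rr where "\<forall>k. E \<times> F \<subseteq> (\<Union>i. ball (cc k i) (rr k i)) \<and> (\<forall>i. 0 \<le> rr k i \<and> rr k i \<le> \<delta>/2) \<and>
      (\<Sum>i. ennreal (rr k i powr ?s)) \<le> ennreal (1 / (real k + 1))"
    by (rule choice[THEN exE])
  then have cr: "\<And>k. E \<times> F \<subseteq> (\<Union>i. ball (cc k i) (rr k i))"
    "\<And>k i. 0 \<le> rr k i \<and> rr k i \<le> \<delta>/2"
    "\<And>k. (\<Sum>i. ennreal (rr k i powr ?s)) \<le> ennreal (1 / (real k + 1))"
    by blast+
  define G where "G f z = (INF k. gfun (cc k) (rr k) t f z)" for f z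
  show ?thesis
  proof (rule that)
    fix f z
    show "hausdorff_approx t \<delta> (E \<inter> (\<lambda>y. f y + z) ` F) \<le> G f z"
      unfolding G_def
    proof (rule INF_greatest)
      fix k :: nat
      show "hausdorff_approx t \<delta> (E \<inter> (\<lambda>y. f y + z) ` F) \<le> gfun (cc k) (rr k) t f z"
      proof (rule gfun_bound[OF cr(1) _ tpos])
        show "\<forall>i. 0 \<le> rr k i \<and> 2 * rr k i \<le> \<delta>"
        proof
          fix i show "0 \<le> rr k i \<and> 2 * rr k i \<le> \<delta>" using cr(2)[of k i] by linarith
        qed
      qed
    qed
  next
    fix f :: "real^'n \<Rightarrow> real^'n" and K :: real
    assume K: "K \<ge> 0" and Lip: "\<forall>y y'. dist (f y) (f y') \<le> K * dist y y'"
    define Cst where "Cst = 2 powr t * unit_ball_vol (CARD('n)) * (1+K) ^ CARD('n)"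
    have Cpos: "Cst \<ge> 0" using K by (simp add: Cst_def)
    have bnd: "(\<integral>\<^sup>+z. G f z \<partial>lborel) \<le> ennreal (Cst * (1 / (real k + 1)))" for k :: nat
    proof -
      have r0: "\<forall>i. 0 \<le> rr k i" using cr(2)[of k] by blast
      have "(\<integral>\<^sup>+z. G f z \<partial>lborel) \<le> (\<integral>\<^sup>+z. gfun (cc k) (rr k) t f z \<partial>lborel)"
        unfolding G_def by (intro nn_integral_mono INF_lower) auto
      also have "\<dots> \<le> ennreal Cst * (\<Sum>i. ennreal (rr k i powr ?s))"
        unfolding Cst_def by (rule gfun_integral[OF Lip K r0 tpos])
      also have "\<dots> \<le> ennreal Cst * ennreal (1 / (real k + 1))"
        using cr(3)[of k] by (rule mult_left_mono) simp
      also have "\<dots> = ennreal (Cst * (1 / (real k + 1)))"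
        by (rule ennreal_mult[symmetric]) (use Cpos in auto)
      finally show ?thesis .
    qed
    have "(\<integral>\<^sup>+z. G f z \<partial>lborel) \<le> 0"
    proof (rule ennreal_le_epsilon)
      fix e :: real assume "0 < e"
      obtain k :: nat where k: "Cst / e < real k" using reals_Archimedean2 by blast
      have "Cst * (1 / (real k + 1)) \<le> e"
        using k \<open>0<e\<close> Cpos by (simp add: field_simps)
      then have "ennreal (Cst * (1 / (real k + 1))) \<le> ennreal e" by (rule ennreal_leI)
      then show "(\<integral>\<^sup>+z. G f z \<partial>lborel) \<le> 0 + ennreal e"
        using order_trans[OF bnd[of k]] by simp
    qed
    then show "(\<integral>\<^sup>+z. G f z \<partial>lborel) = 0" by simp
  next
    fix Q :: "'q measure" and zq :: "'q \<Rightarrow> real^'n" and fq :: "'q \<Rightarrow> real^'n \<Rightarrow> real^'n"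
    assume a: "zq \<in> borel_measurable Q" "\<And>y. (\<lambda>q. fq q y) \<in> borel_measurable Q" "\<And>q. continuous_on UNIV (fq q)"
    show "(\<lambda>q. G (fq q) (zq q)) \<in> borel_measurable Q"
      unfolding G_def
    proof (rule borel_measurable_INF)
      fix k :: nat
      show "(\<lambda>q. gfun (cc k) (rr k) t (fq q) (zq q)) \<in> borel_measurable Q"
        by (rule gfun_measurable[OF a])
    qed simp
  qed
qed



definition good :: "'q measure \<Rightarrow> ('q \<Rightarrow> real^'n) \<Rightarrow> ('q \<Rightarrow> real^'n \<Rightarrow> real^'n) \<Rightarrow> bool" where
  "good Q zq fq \<longleftrightarrow> (\<forall>G::(real^'n \<Rightarrow> real^'n) \<Rightarrow> real^'n \<Rightarrow> ennreal.
     (\<lambda>q. G (fq q) (zq q)) \<in> borel_measurable Q \<longrightarrow>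
     (\<forall>f K. K \<ge> 0 \<longrightarrow> (\<forall>y y'. dist (f y) (f y') \<le> K * dist y y') \<longrightarrow> (\<integral>\<^sup>+z. G f z \<partial>lborel) = 0) \<longrightarrow>
     (AE q in Q. G (fq q) (zq q) = 0))"

lemma outer_above_dim:
  fixes A :: "'a::euclidean_space set"
  assumes "s > hausdorff_dim A"
  shows "hausdorff_outer s A = 0"
proof -
  let ?S = "{s. 0 \<le> s \<and> hausdorff_outer s A = 0}"
  have "real DIM('a) + 1 \<in> ?S"
    using outer_zero_mono_set[OF subset_UNIV outer_UNIV_zero] by simp
  then have ne: "?S \<noteq> {}" by blast
  have bb: "bdd_below ?S" by (rule bdd_belowI[where m=0]) auto
  have "Inf ?S < s" using assms by (simp add: hausdorff_dim_def)
  then obtain s' where "s' \<in> ?S" "s' < s" using cInf_less_iff[OF ne bb] by blast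
  then show ?thesis using outer_zero_mono_s by blast
qed

lemma main_general:
  fixes E F :: "(real^'n) set" and Q :: "'q measure"
    and zq :: "'q \<Rightarrow> real^'n" and fq :: "'q \<Rightarrow> real^'n \<Rightarrow> real^'n"
  assumes gd: "good Q zq fq" and zm: "zq \<in> borel_measurable Q"
    and fm: "\<And>y. (\<lambda>q. fq q y) \<in> borel_measurable Q" and fc: "\<And>q. continuous_on UNIV (fq q)"
  shows "AE q in Q. hausdorff_dim (E \<inter> (\<lambda>y. fq q y + zq q) ` F)
            \<le> max 0 (hausdorff_dim (E \<times> F) - real CARD('n))"
proof -
  define b where "b = max 0 (hausdorff_dim (E \<times> F) - real CARD('n))"
  have step: "AE q in Q. hausdorff_dim (E \<inter> (\<lambda>y. fq q y + zq q) ` F) \<le> t" if tb: "t > b" for t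
  proof -
    have tpos: "t > 0" using tb by (simp add: b_def)
    have "t + real CARD('n) > hausdorff_dim (E \<times> F)" using tb by (simp add: b_def)
    then have H: "hausdorff_outer (t + real CARD('n)) (E \<times> F) = 0" by (rule outer_above_dim)
    have "AE q in Q. hausdorff_approx t (1 / (real j + 1)) (E \<inter> (\<lambda>y. fq q y + zq q) ` F) = 0" for j :: nat
    proof -
      have "1 / (real j + 1) > 0" by simp
      from core[OF H tpos this] obtain G :: "(real^'n \<Rightarrow> real^'n) \<Rightarrow> real^'n \<Rightarrow> ennreal" where
        G1: "\<And>f z. hausdorff_approx t (1 / (real j + 1)) (E \<inter> (\<lambda>y. f y + z) ` F) \<le> G f z" and
        G2: "\<And>f K. K \<ge> 0 \<Longrightarrow> \<forall>y y'. dist (f y) (f y') \<le> K * dist y y' \<Longrightarrow> (\<integral>\<^sup>+z. G f z \<partial>lborel) = 0" and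
        G3: "\<And>(Q::'q measure) zq fq. zq \<in> borel_measurable Q \<Longrightarrow> (\<And>y. (\<lambda>q. fq q y) \<in> borel_measurable Q) \<Longrightarrow>
          (\<And>q. continuous_on UNIV (fq q)) \<Longrightarrow> (\<lambda>q. G (fq q) (zq q)) \<in> borel_measurable Q"
        by blast
      have m: "(\<lambda>q. G (fq q) (zq q)) \<in> borel_measurable Q" by (rule G3[OF zm fm fc])
      have "AE q in Q. G (fq q) (zq q) = 0"
        using gd m G2 unfolding good_def by blast
      then show ?thesis
        by (rule eventually_mono) (metis G1 le_zero_eq)
    qed
    then have "AE q in Q. \<forall>j::nat. hausdorff_approx t (1 / (real j + 1)) (E \<inter> (\<lambda>y. fq q y + zq q) ` F) = 0"
      by (simp add: AE_all_countable)
    then show ?thesis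
    proof (rule eventually_mono)
      fix q assume hq: "\<forall>j::nat. hausdorff_approx t (1 / (real j + 1)) (E \<inter> (\<lambda>y. fq q y + zq q) ` F) = 0"
      have "hausdorff_outer t (E \<inter> (\<lambda>y. fq q y + zq q) ` F) = 0"
        unfolding outer_zero_iff
      proof (intro allI impI)
        fix \<delta> :: real assume "\<delta> > 0"
        obtain j :: nat where "1 / \<delta> < real j" using reals_Archimedean2 by blast
        then have "1 / (real j + 1) \<le> \<delta>" using \<open>\<delta>>0\<close> by (simp add: field_simps)
        then have "hausdorff_approx t \<delta> (E \<inter> (\<lambda>y. fq q y + zq q) ` F)
            \<le> hausdorff_approx t (1 / (real j + 1)) (E \<inter> (\<lambda>y. fq q y + zq q) ` F)"
          by (rule approx_mono_delta)
        then show "hausdorff_approx t \<delta> (E \<inter> (\<lambda>y. fq q y + zq q) ` F) = 0" using hq by simp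
      qed
      then show "hausdorff_dim (E \<inter> (\<lambda>y. fq q y + zq q) ` F) \<le> t"
        using tpos by (intro dim_le) auto
    qed
  qed
  have cnt: "countable {t \<in> \<rat>. t > b}" by (rule countable_subset[OF _ countable_rat]) auto
  have "AE q in Q. \<forall>t \<in> {t \<in> \<rat>. t > b}. hausdorff_dim (E \<inter> (\<lambda>y. fq q y + zq q) ` F) \<le> t"
    using step by (subst AE_ball_countable[OF cnt]) auto
  then show ?thesis
  proof (rule eventually_mono)
    fix q assume hq: "\<forall>t \<in> {t \<in> \<rat>. t > b}. hausdorff_dim (E \<inter> (\<lambda>y. fq q y + zq q) ` F) \<le> t"
    show "hausdorff_dim (E \<inter> (\<lambda>y. fq q y + zq q) ` F) \<le> max 0 (hausdorff_dim (E \<times> F) - real CARD('n))"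
    proof (rule ccontr)
      assume "\<not> ?thesis"
      then have "b < hausdorff_dim (E \<inter> (\<lambda>y. fq q y + zq q) ` F)" by (simp add: b_def not_le)
      then obtain t where "t \<in> \<rat>" "b < t" "t < hausdorff_dim (E \<inter> (\<lambda>y. fq q y + zq q) ` F)"
        using Rats_dense_in_real by blast
      then show False using hq by force
    qed
  qed
qed

lemma orth_dist:
  assumes "orthogonal_matrix (R::real^'n^'n)"
  shows "dist (R *v y) (R *v y') = dist y y'"
proof -
  have "orthogonal_transformation ((*v) R)"
    using assms by (simp add: orthogonal_transformation_matrix)
  then show ?thesis by (simp add: orthogonal_transformation_isometry)
qed

lemma mv_measurable:
  assumes "haar_orthogonal \<mu>"
  shows "(\<lambda>R::real^'n^'n. R *v y) \<in> borel_measurable \<mu>"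
proof -
  have "continuous_on UNIV (\<lambda>R::real^'n^'n. R *v y)"
    unfolding matrix_vector_mult_def by (intro continuous_intros)
  then have "(\<lambda>R::real^'n^'n. R *v y) \<in> borel_measurable borel"
    by (rule borel_measurable_continuous_onI)
  then have "(\<lambda>R::real^'n^'n. R *v y) \<in> borel_measurable (restrict_space borel {R. orthogonal_matrix R})"
    by (rule measurable_restrict_space1)
  moreover have "sets \<mu> = sets (restrict_space borel {R. orthogonal_matrix R})"
    using assms by (simp add: haar_orthogonal_def)
  ultimately show ?thesis using measurable_cong_sets[of \<mu> "restrict_space borel {R. orthogonal_matrix R}" borel borel]
    by simp
qed



lemma good_rigid:
  assumes hm: "haar_orthogonal \<mu>"
  shows "good (\<mu> \<Otimes>\<^sub>M lborel) snd (\<lambda>q y. fst q *v (y::real^'n))"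
  unfolding good_def
proof (intro allI impI)
  fix G :: "(real^'n \<Rightarrow> real^'n) \<Rightarrow> real^'n \<Rightarrow> ennreal"
  assume m: "(\<lambda>q. G (\<lambda>y. fst q *v y) (snd q)) \<in> borel_measurable (\<mu> \<Otimes>\<^sub>M lborel)"
    and z: "\<forall>f K. K \<ge> 0 \<longrightarrow> (\<forall>y y'. dist (f y) (f y') \<le> K * dist y y') \<longrightarrow> (\<integral>\<^sup>+z. G f z \<partial>lborel) = 0"
  have "integral\<^sup>N (\<mu> \<Otimes>\<^sub>M lborel) (\<lambda>q. G (\<lambda>y. fst q *v y) (snd q)) = (\<integral>\<^sup>+R. \<integral>\<^sup>+z. G (\<lambda>y. R *v y) z \<partial>lborel \<partial>\<mu>)"
    using lborel.nn_integral_fst[OF m] by simp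
  also have "\<dots> = (\<integral>\<^sup>+R. 0 \<partial>\<mu>)"
  proof (rule nn_integral_cong)
    fix R assume "R \<in> space \<mu>"
    then have "orthogonal_matrix R" using hm by (simp add: haar_orthogonal_def)
    then have L: "\<forall>y y'. dist (R *v y) (R *v y') \<le> 1 * dist y y'" by (simp add: orth_dist)
    show "(\<integral>\<^sup>+z. G (\<lambda>y. R *v y) z \<partial>lborel) = 0"
      using z[rule_format, of 1 "\<lambda>y. R *v y"] L by simp
  qed
  finally have "integral\<^sup>N (\<mu> \<Otimes>\<^sub>M lborel) (\<lambda>q. G (\<lambda>y. fst q *v y) (snd q)) = 0" by simp
  then show "AE q in \<mu> \<Otimes>\<^sub>M lborel. G (\<lambda>y. fst q *v y) (snd q) = 0"
    using nn_integral_0_iff_AE[OF m] by simp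
qed

lemma good_sim:
  assumes hm: "haar_orthogonal \<mu>"
  shows "good (\<mu> \<Otimes>\<^sub>M (restrict_space lborel {0<..} \<Otimes>\<^sub>M lborel)) (\<lambda>q. snd (snd q))
            (\<lambda>q y. fst (snd q) *\<^sub>R (fst q *v (y::real^'n)))"
  unfolding good_def
proof (intro allI impI)
  let ?Mc = "restrict_space lborel {0::real<..}"
  fix G :: "(real^'n \<Rightarrow> real^'n) \<Rightarrow> real^'n \<Rightarrow> ennreal"
  assume m: "(\<lambda>q. G (\<lambda>y. fst (snd q) *\<^sub>R (fst q *v y)) (snd (snd q))) \<in> borel_measurable (\<mu> \<Otimes>\<^sub>M (?Mc \<Otimes>\<^sub>M lborel))"
    and z: "\<forall>f K. K \<ge> 0 \<longrightarrow> (\<forall>y y'. dist (f y) (f y') \<le> K * dist y y') \<longrightarrow> (\<integral>\<^sup>+z. G f z \<partial>lborel) = 0"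
  have sfc: "sigma_finite_measure ?Mc"
    by (rule sigma_finite_measure_restrict_space[OF lborel.sigma_finite_measure_axioms]) simp
  interpret sf: sigma_finite_measure "?Mc \<Otimes>\<^sub>M lborel"
    by (rule sigma_finite_pair_measure[OF sfc lborel.sigma_finite_measure_axioms])
  have "integral\<^sup>N (\<mu> \<Otimes>\<^sub>M (?Mc \<Otimes>\<^sub>M lborel)) (\<lambda>q. G (\<lambda>y. fst (snd q) *\<^sub>R (fst q *v y)) (snd (snd q)))
      = (\<integral>\<^sup>+R. \<integral>\<^sup>+cz. G (\<lambda>y. fst cz *\<^sub>R (R *v y)) (snd cz) \<partial>(?Mc \<Otimes>\<^sub>M lborel) \<partial>\<mu>)"
    using sf.nn_integral_fst[OF m] by simp
  also have "\<dots> = (\<integral>\<^sup>+R. 0 \<partial>\<mu>)"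
  proof (rule nn_integral_cong)
    fix R assume R: "R \<in> space \<mu>"
    then have orth: "orthogonal_matrix R" using hm by (simp add: haar_orthogonal_def)
    have m2: "(\<lambda>cz. G (\<lambda>y. fst cz *\<^sub>R (R *v y)) (snd cz)) \<in> borel_measurable (?Mc \<Otimes>\<^sub>M lborel)"
      using measurable_Pair2[OF m R] by simp
    have "(\<integral>\<^sup>+cz. G (\<lambda>y. fst cz *\<^sub>R (R *v y)) (snd cz) \<partial>(?Mc \<Otimes>\<^sub>M lborel))
        = (\<integral>\<^sup>+c. \<integral>\<^sup>+z. G (\<lambda>y. c *\<^sub>R (R *v y)) z \<partial>lborel \<partial>?Mc)"
      using lborel.nn_integral_fst[OF m2] by simp
    also have "\<dots> = (\<integral>\<^sup>+c. 0 \<partial>?Mc)"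
    proof (rule nn_integral_cong)
      fix c :: real
      have "\<forall>y y'. dist (c *\<^sub>R (R *v y)) (c *\<^sub>R (R *v y')) \<le> \<bar>c\<bar> * dist y y'"
      proof (intro allI)
        fix y y' :: "real^'n"
        have "dist (c *\<^sub>R (R *v y)) (c *\<^sub>R (R *v y')) = \<bar>c\<bar> * dist (R *v y) (R *v y')"
          by (simp add: dist_norm scaleR_diff_right[symmetric])
        then show "dist (c *\<^sub>R (R *v y)) (c *\<^sub>R (R *v y')) \<le> \<bar>c\<bar> * dist y y'"
          using orth_dist[OF orth] by simp
      qed
      then show "(\<integral>\<^sup>+z. G (\<lambda>y. c *\<^sub>R (R *v y)) z \<partial>lborel) = 0"
        using z[rule_format, of "\<bar>c\<bar>" "\<lambda>y. c *\<^sub>R (R *v y)"] by simp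
    qed
    finally show "(\<integral>\<^sup>+cz. G (\<lambda>y. fst cz *\<^sub>R (R *v y)) (snd cz) \<partial>(?Mc \<Otimes>\<^sub>M lborel)) = 0" by simp
  qed
  finally have "integral\<^sup>N (\<mu> \<Otimes>\<^sub>M (?Mc \<Otimes>\<^sub>M lborel)) (\<lambda>q. G (\<lambda>y. fst (snd q) *\<^sub>R (fst q *v y)) (snd (snd q))) = 0"
    by simp
  then show "AE q in \<mu> \<Otimes>\<^sub>M (?Mc \<Otimes>\<^sub>M lborel). G (\<lambda>y. fst (snd q) *\<^sub>R (fst q *v y)) (snd (snd q)) = 0"
    using nn_integral_0_iff_AE[OF m] by simp
qed

theorem mainTheorem2:
  fixes E F :: "(real^'n) set" and \<mu> :: "(real^'n^'n) measure"
  assumes "haar_orthogonal \<mu>"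
  shows "(AE p in \<mu> \<Otimes>\<^sub>M lborel.
           hausdorff_dim (E \<inter> (\<lambda>x. fst p *v x + snd p) ` F)
             \<le> max 0 (hausdorff_dim (E \<times> F) - real CARD('n)))
       \<and> (AE p in \<mu> \<Otimes>\<^sub>M (restrict_space lborel {0<..} \<Otimes>\<^sub>M lborel).
           hausdorff_dim (E \<inter> (\<lambda>x. fst (snd p) *\<^sub>R (fst p *v x) + snd (snd p)) ` F)
             \<le> max 0 (hausdorff_dim (E \<times> F) - real CARD('n)))"
proof
  have mv: "\<And>y. (\<lambda>R::real^'n^'n. R *v y) \<in> borel_measurable \<mu>" by (rule mv_measurable[OF assms])
  show "AE p in \<mu> \<Otimes>\<^sub>M lborel.
           hausdorff_dim (E \<inter> (\<lambda>x. fst p *v x + snd p) ` F)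
             \<le> max 0 (hausdorff_dim (E \<times> F) - real CARD('n))"
  proof (rule main_general[OF good_rigid[OF assms], where E=E and F=F])
    show "snd \<in> borel_measurable (\<mu> \<Otimes>\<^sub>M lborel)" by simp
    show "(\<lambda>q. fst q *v y) \<in> borel_measurable (\<mu> \<Otimes>\<^sub>M lborel)" for y
      by (rule measurable_compose[OF measurable_fst mv])
    show "continuous_on UNIV (\<lambda>y. fst q *v y)" for q :: "(real^'n^'n) \<times> (real^'n)"
      by (intro continuous_intros)
  qed
  let ?Mc = "restrict_space lborel {0::real<..}"
  have cm: "(\<lambda>q::(real^'n^'n) \<times> real \<times> (real^'n). fst (snd q)) \<in> borel_measurable (\<mu> \<Otimes>\<^sub>M (?Mc \<Otimes>\<^sub>M lborel))"
  proof -
    have "(\<lambda>c::real. c) \<in> borel_measurable ?Mc"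
      by (rule measurable_restrict_space1) simp
    then show ?thesis
      by (rule measurable_compose[OF measurable_compose[OF measurable_snd measurable_fst]])
  qed
  show "AE p in \<mu> \<Otimes>\<^sub>M (?Mc \<Otimes>\<^sub>M lborel).
           hausdorff_dim (E \<inter> (\<lambda>x. fst (snd p) *\<^sub>R (fst p *v x) + snd (snd p)) ` F)
             \<le> max 0 (hausdorff_dim (E \<times> F) - real CARD('n))"
  proof (rule main_general[OF good_sim[OF assms], where E=E and F=F])
    show "(\<lambda>q. snd (snd q)) \<in> borel_measurable (\<mu> \<Otimes>\<^sub>M (?Mc \<Otimes>\<^sub>M lborel))" by simp
    show "(\<lambda>q::(real^'n^'n) \<times> real \<times> (real^'n). fst (snd q) *\<^sub>R (fst q *v y)) \<in> borel_measurable (\<mu> \<Otimes>\<^sub>M (?Mc \<Otimes>\<^sub>M lborel))" for y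
      apply (rule borel_measurable_scaleR)
       apply (rule cm)
      apply (rule measurable_compose[OF measurable_fst mv])
      done
    show "continuous_on UNIV (\<lambda>y. fst (snd q) *\<^sub>R (fst q *v y))" for q :: "(real^'n^'n) \<times> real \<times> (real^'n)"
      by (intro continuous_intros)
  qed
qed


end
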